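(* For every integer $d \geq 2$, $$\overline{\bigcup_{s\geq 1}\mathsf U_{d,s}}=\mathsf B_d,$$ where the closure is taken in $\mathbb R^{d\times d}$.
   Context: $\mathsf B_d$ denotes the set of $d\times d$ bistochastic matrices (real matrices with non-negative entries whose rows and columns each sum to $1$). For integers $d\ge 2$, $s\ge 1$, a matrix $U\in\mathcal U(ds)$ (the group of $ds\times ds$ complex unitary matrices) is viewed as a $d\times d$ block matrix with blocks $U_{ij}\in M_s(\mathbb C)$, $i,j\in\{1,\dots,d\}$. Define $\phi_{d,s}(U)=\big(\tfrac1s\|U_{ij}\|_F^2\big)_{i,j=1}^d$, where $\|X\|_F=\operatorname{Tr}(XX^* )^{1/2}$ is the Frobenius norm, and $\mathsf U_{d,s}:=\phi_{d,s}(\mathcal U(ds))$ (the generalized unistochastic matrices). *)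

theory Defs
  imports "HOL-Analysis.Analysis"
begin

text \<open>Real d x d matrices are modelled as real^'d^'d, where d = CARD('d).\<close>

definition bistochastic :: "(real^'d^'d) set" where
  "bistochastic = {B. (\<forall>i j. 0 \<le> B$i$j) \<and> (\<forall>i. (\<Sum>j\<in>UNIV. B$i$j) = 1)
                      \<and> (\<forall>j. (\<Sum>i\<in>UNIV. B$i$j) = 1)}"

text \<open>An n x n complex matrix is represented by its entries U a b for a, b < n.
  Unitary: U U^* = I and U^* U = I.\<close>

definition unitary_mat :: "nat \<Rightarrow> (nat \<Rightarrow> nat \<Rightarrow> complex) \<Rightarrow> bool" where
  "unitary_mat n U \<longleftrightarrow>
     (\<forall>a<n. \<forall>b<n. (\<Sum>c<n. U a c * cnj (U b c)) = (if a = b then 1 else 0)) \<and>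
     (\<forall>a<n. \<forall>b<n. (\<Sum>c<n. cnj (U c a) * U c b) = (if a = b then 1 else 0))"

definition idx :: "'d::finite \<Rightarrow> nat" where
  "idx = (SOME f. bij_betw f (UNIV :: 'd set) {..<CARD('d)})"

text \<open>phi_{d,s}(U): entry (i,j) is (1/s) ||U_ij||_F^2, where the block U_ij
  consists of the entries U (idx i * s + a) (idx j * s + b), a, b < s.\<close>

definition phi :: "nat \<Rightarrow> (nat \<Rightarrow> nat \<Rightarrow> complex) \<Rightarrow> real^'d::finite^'d" where
  "phi s U = (\<chi> i j. (1 / real s) *
      (\<Sum>a<s. \<Sum>b<s. (cmod (U (idx i * s + a) (idx j * s + b)))\<^sup>2))"

definition unistochastic_gen :: "nat \<Rightarrow> (real^'d::finite^'d) set" where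
  "unistochastic_gen s = phi s ` {U. unitary_mat (CARD('d) * s) U}"

end

theory Submission
  imports Defs
begin

lemma idx_bij: "bij_betw (idx :: 'd::finite \<Rightarrow> nat) UNIV {..<CARD('d)}"
proof -
  have "\<exists>f. bij_betw f (UNIV :: 'd set) {..<CARD('d)}"
    using ex_bij_betw_finite_nat[of "UNIV :: 'd set"] by (simp add: atLeast0LessThan)
  then show ?thesis unfolding idx_def by (rule someI_ex)
qed

lemma divmod_blk: "b < (s::nat) \<Longrightarrow> (i * s + b) div s = i \<and> (i * s + b) mod s = b"
  by auto

lemma blk_lt: "i < d \<Longrightarrow> b < (s::nat) \<Longrightarrow> i * s + b < d * s"
proof -
  assume "i < d" "b < s"
  then have "i * s + b < i * s + s" by simp
  also have "\<dots> = (i+1) * s" by simp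
  also have "\<dots> \<le> d * s" using \<open>i < d\<close> by (intro mult_le_mono1) simp
  finally show ?thesis .
qed

lemma block_bij:
  assumes "(s::nat) > 0"
  shows "bij_betw (\<lambda>(i,b). i * s + b) ({..<d} \<times> {..<s}) {..<d * s}"
proof (rule bij_betwI')
  fix x y assume "x \<in> {..<d} \<times> {..<s}" "y \<in> {..<d} \<times> {..<s}"
  then show "((case x of (i, b) \<Rightarrow> i * s + b) = (case y of (i, b) \<Rightarrow> i * s + b)) = (x = y)"
  proof (cases x, cases y)
    fix i b i' b' assume xy: "x = (i,b)" "y = (i',b')"
    with \<open>x \<in> _\<close> \<open>y \<in> _\<close> have "b < s" "b' < s" by auto
    show ?thesis
    proof
      assume "(case x of (i, b) \<Rightarrow> i * s + b) = (case y of (i, b) \<Rightarrow> i * s + b)"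
      then have e: "i * s + b = i' * s + b'" using xy by simp
      have "i = i'" using divmod_blk[OF \<open>b < s\<close>, of i] divmod_blk[OF \<open>b' < s\<close>, of i'] e by simp
      moreover have "b = b'" using divmod_blk[OF \<open>b < s\<close>, of i] divmod_blk[OF \<open>b' < s\<close>, of i'] e by simp
      ultimately show "x = y" using xy by simp
    qed simp
  qed
next
  fix x assume "x \<in> {..<d} \<times> {..<s}"
  then show "(case x of (i, b) \<Rightarrow> i * s + b) \<in> {..<d * s}"
    by (cases x) (auto simp: blk_lt)
next
  fix y assume "y \<in> {..<d * s}"
  then show "\<exists>x\<in>{..<d} \<times> {..<s}. y = (case x of (i, b) \<Rightarrow> i * s + b)"
    apply (intro bexI[of _ "(y div s, y mod s)"])
    using assms by (auto simp: less_mult_imp_div_less)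
qed

lemma sum_blocks:
  assumes "(s::nat) > 0"
  shows "(\<Sum>j\<in>(UNIV::'d::finite set). \<Sum>b<s. g (idx j * s + b)) = (\<Sum>c<CARD('d) * s. g c)"
proof -
  have "(\<Sum>j\<in>(UNIV::'d set). \<Sum>b<s. g (idx j * s + b)) = (\<Sum>i<CARD('d). \<Sum>b<s. g (i * s + b))"
    using sum.reindex_bij_betw[OF idx_bij, of "\<lambda>i. \<Sum>b<s. g (i * s + b)"] by simp
  also have "\<dots> = (\<Sum>(i,b)\<in>{..<CARD('d)} \<times> {..<s}. g (i * s + b))"
    by (simp add: sum.cartesian_product)
  also have "\<dots> = (\<Sum>c<CARD('d) * s. g c)"
    using sum.reindex_bij_betw[OF block_bij[OF assms, of "CARD('d)"], of g]
    by (simp add: case_prod_unfold)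
  finally show ?thesis .
qed

lemma row_norm:
  assumes "unitary_mat n U" "x < n"
  shows "(\<Sum>c<n. (cmod (U x c))\<^sup>2) = 1"
proof -
  have "(\<Sum>c<n. U x c * cnj (U x c)) = 1" using assms unfolding unitary_mat_def by auto
  then have "complex_of_real (\<Sum>c<n. (cmod (U x c))\<^sup>2) = 1"
    by (simp only: of_real_sum complex_norm_square)
  then show ?thesis by (metis of_real_eq_1_iff)
qed

lemma col_norm:
  assumes "unitary_mat n U" "x < n"
  shows "(\<Sum>c<n. (cmod (U c x))\<^sup>2) = 1"
proof -
  have "(\<Sum>c<n. cnj (U c x) * U c x) = 1" using assms unfolding unitary_mat_def by auto
  then have "complex_of_real (\<Sum>c<n. (cmod (U c x))\<^sup>2) = 1"
    by (simp only: of_real_sum complex_norm_square mult.commute)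
  then show ?thesis by (metis of_real_eq_1_iff)
qed

lemma phi_bist:
  assumes s: "(s::nat) > 0" and U: "unitary_mat (CARD('d::finite) * s) U"
  shows "(phi s U :: real^'d^'d) \<in> bistochastic"
proof -
  let ?n = "CARD('d) * s"
  have ilt: "idx (i::'d) < CARD('d)" for i using idx_bij[where 'd='d] by (auto simp: bij_betw_def)
  have rows: "(\<Sum>j\<in>UNIV. (phi s U :: real^'d^'d) $ i $ j) = 1" for i
  proof -
    have "(\<Sum>j\<in>UNIV. (phi s U :: real^'d^'d) $ i $ j)
        = (1 / real s) * (\<Sum>a<s. \<Sum>j\<in>(UNIV::'d set). \<Sum>b<s. (cmod (U (idx i * s + a) (idx j * s + b)))\<^sup>2)"
      unfolding phi_def by (simp add: sum_distrib_left sum.swap[of _ "UNIV::'d set"])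
    also have "\<dots> = (1 / real s) * (\<Sum>a<s. \<Sum>c<?n. (cmod (U (idx i * s + a) c))\<^sup>2)"
      by (intro arg_cong[where f="\<lambda>x. _ * x"] sum.cong refl) (rule sum_blocks[OF s])
    also have "\<dots> = (1 / real s) * (\<Sum>a<s. 1)"
      by (intro arg_cong[where f="\<lambda>x. _ * x"] sum.cong refl row_norm[OF U] blk_lt ilt) auto
    finally show ?thesis using s by simp
  qed
  have cols: "(\<Sum>i\<in>UNIV. (phi s U :: real^'d^'d) $ i $ j) = 1" for j
  proof -
    have "(\<Sum>i\<in>UNIV. (phi s U :: real^'d^'d) $ i $ j)
        = (1 / real s) * (\<Sum>b<s. \<Sum>i\<in>(UNIV::'d set). \<Sum>a<s. (cmod (U (idx i * s + a) (idx j * s + b)))\<^sup>2)"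
    proof -
      have e1: "(\<Sum>i\<in>UNIV. (phi s U :: real^'d^'d) $ i $ j) = (1 / real s) * (\<Sum>i\<in>(UNIV::'d set). \<Sum>a<s. \<Sum>b<s. (cmod (U (idx i * s + a) (idx j * s + b)))\<^sup>2)"
        unfolding phi_def by (simp add: sum_distrib_left)
      have e2: "(\<Sum>i\<in>(UNIV::'d set). \<Sum>a<s. \<Sum>b<s. (cmod (U (idx i * s + a) (idx j * s + b)))\<^sup>2)
          = (\<Sum>i\<in>(UNIV::'d set). \<Sum>b<s. \<Sum>a<s. (cmod (U (idx i * s + a) (idx j * s + b)))\<^sup>2)"
        by (rule sum.cong, rule refl, rule sum.swap)
      have e3: "(\<Sum>i\<in>(UNIV::'d set). \<Sum>b<s. \<Sum>a<s. (cmod (U (idx i * s + a) (idx j * s + b)))\<^sup>2) = (\<Sum>b<s. \<Sum>i\<in>(UNIV::'d set). \<Sum>a<s. (cmod (U (idx i * s + a) (idx j * s + b)))\<^sup>2)"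
        by (rule sum.swap)
      show ?thesis using e1 e2 e3 by simp
    qed
    also have "\<dots> = (1 / real s) * (\<Sum>b<s. \<Sum>c<?n. (cmod (U c (idx j * s + b)))\<^sup>2)"
      by (intro arg_cong[where f="\<lambda>x. _ * x"] sum.cong refl) (rule sum_blocks[OF s])
    also have "\<dots> = (1 / real s) * (\<Sum>b<s. 1)"
      by (intro arg_cong[where f="\<lambda>x. _ * x"] sum.cong refl col_norm[OF U] blk_lt ilt) auto
    finally show ?thesis using s by simp
  qed
  show ?thesis unfolding bistochastic_def
    using rows cols by (auto simp: phi_def intro!: sum_nonneg divide_nonneg_nonneg simp del: sum_divide_distrib)
qed


lemma perm_extend:
  assumes X: "finite X" and K: "finite K"
   and IX: "\<forall>k\<in>K. I k \<subseteq> X" and JX: "\<forall>k\<in>K. J k \<subseteq> X"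
   and Id: "\<forall>k\<in>K. \<forall>k'\<in>K. k \<noteq> k' \<longrightarrow> I k \<inter> I k' = {}"
   and Jd: "\<forall>k\<in>K. \<forall>k'\<in>K. k \<noteq> k' \<longrightarrow> J k \<inter> J k' = {}"
   and c: "\<forall>k\<in>K. card (I k) = card (J k)"
  shows "\<exists>f. bij_betw f X X \<and> (\<forall>k\<in>K. \<forall>x\<in>I k. f x \<in> J k)"
proof -
  have fI: "finite (I k)" "finite (J k)" if "k \<in> K" for k
    using IX JX X that by (meson finite_subset)+
  have "\<forall>k\<in>K. \<exists>h. bij_betw h (I k) (J k)"
    using fI c by (auto intro!: finite_same_card_bij)
  from bchoice[OF this] obtain h where h: "\<And>k. k \<in> K \<Longrightarrow> bij_betw (h k) (I k) (J k)" by blast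
  define hf where "hf x = h (SOME k. k \<in> K \<and> x \<in> I k) x" for x
  have hfk: "hf x = h k x" if "k \<in> K" "x \<in> I k" for k x
  proof -
    have "(SOME k. k \<in> K \<and> x \<in> I k) = k"
      using that Id by (intro some_equality) auto
    then show ?thesis by (simp add: hf_def)
  qed
  have hb: "bij_betw hf (I k) (J k)" if "k \<in> K" for k
    by (subst bij_betw_cong[where g="h k"]) (use hfk h that in auto)
  define IU where "IU = (\<Union>k\<in>K. I k)"
  define JU where "JU = (\<Union>k\<in>K. J k)"
  have b1: "bij_betw hf IU JU" unfolding IU_def JU_def
    by (rule bij_betw_UNION_disjoint) (use Jd hb in \<open>auto simp: disjoint_family_on_def\<close>)
  have "card IU = (\<Sum>k\<in>K. card (I k))" unfolding IU_def
    by (rule card_UN_disjoint) (use K fI Id in auto)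
  also have "\<dots> = (\<Sum>k\<in>K. card (J k))" using c by simp
  also have "\<dots> = card JU" unfolding JU_def
    by (rule card_UN_disjoint[symmetric]) (use K fI Jd in auto)
  finally have cIJ: "card IU = card JU" .
  have sub: "IU \<subseteq> X" "JU \<subseteq> X" using IX JX by (auto simp: IU_def JU_def)
  have "card (X - IU) = card (X - JU)"
    using sub cIJ X by (simp add: card_Diff_subset finite_subset)
  then obtain g where g: "bij_betw g (X - IU) (X - JU)"
    using finite_same_card_bij[of "X - IU" "X - JU"] X by auto
  have "bij_betw (\<lambda>x. if x \<in> IU then hf x else g x) (IU \<union> (X - IU)) (JU \<union> (X - JU))"
    by (rule bij_betw_disjoint_Un[OF b1 g]) auto
  moreover have "IU \<union> (X - IU) = X" "JU \<union> (X - JU) = X" using sub by auto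
  ultimately have "bij_betw (\<lambda>x. if x \<in> IU then hf x else g x) X X" by simp
  moreover have "\<forall>k\<in>K. \<forall>x\<in>I k. (\<lambda>x. if x \<in> IU then hf x else g x) x \<in> J k"
  proof (intro ballI)
    fix k x assume "k \<in> K" "x \<in> I k"
    then have "x \<in> IU" unfolding IU_def by blast
    moreover have "hf x \<in> J k" using hb[OF \<open>k \<in> K\<close>] \<open>x \<in> I k\<close> by (auto simp: bij_betw_def)
    ultimately show "(\<lambda>x. if x \<in> IU then hf x else g x) x \<in> J k" by simp
  qed
  ultimately show ?thesis by blast
qed


definition Tint :: "(nat \<Rightarrow> nat \<Rightarrow> nat) \<Rightarrow> nat \<Rightarrow> nat \<Rightarrow> nat \<Rightarrow> nat set" where
  "Tint P s u v = {u * s + (\<Sum>w<v. P u w) ..< u * s + (\<Sum>w<v. P u w) + P u v}"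

lemma Tint_le:
  fixes P :: "nat \<Rightarrow> nat \<Rightarrow> nat" and v :: nat
  assumes rs: "(\<Sum>w<d. P u w) \<le> s" and "v < d"
  shows "(\<Sum>w<v. P u w) + P u v \<le> s"
proof -
  have "(\<Sum>w<v. P u w) + P u v = (\<Sum>w<Suc v. P u w)" by simp
  also have "\<dots> \<le> (\<Sum>w<d. P u w)" using \<open>v < d\<close> by (intro sum_mono2) auto
  finally show ?thesis using rs by simp
qed

lemma Tint_div:
  assumes rs: "(\<Sum>w<d. P u w) \<le> s" and "v < d" and x: "x \<in> Tint P s u v"
  shows "x div s = u"
proof -
  have "x < u * s + s" using x Tint_le[where P=P and u=u, OF rs \<open>v < d\<close>] by (auto simp: Tint_def)
  moreover have "u * s \<le> x" using x by (auto simp: Tint_def)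
  ultimately show ?thesis by (intro div_nat_eqI) (auto simp: mult.commute)
qed

lemma Tint_sub:
  assumes rs: "(\<Sum>w<d. P u w) \<le> s" and "v < d" and "u < d"
  shows "Tint P s u v \<subseteq> {..<d * s}"
proof
  fix x assume x: "x \<in> Tint P s u v"
  have "x < u * s + s" using x Tint_le[where P=P and u=u, OF rs \<open>v < d\<close>] by (auto simp: Tint_def)
  also have "\<dots> = Suc u * s" by simp
  also have "\<dots> \<le> d * s" using \<open>u < d\<close> by (intro mult_le_mono1) simp
  finally show "x \<in> {..<d * s}" by simp
qed

lemma Tint_disj_same:
  assumes "v < v'"
  shows "Tint P s u v \<inter> Tint P s u v' = {}"
proof -
  have "(\<Sum>w<v. P u w) + P u v = (\<Sum>w<Suc v. P u w)" by simp
  also have "\<dots> \<le> (\<Sum>w<v'. P u w)" using assms by (intro sum_mono2) auto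
  finally show ?thesis by (auto simp: Tint_def)
qed

lemma Tint_disj:
  assumes rs: "\<And>u. u < d \<Longrightarrow> (\<Sum>w<d. P u w) \<le> s"
    and "u < d" "v < d" "u' < d" "v' < d" "(u,v) \<noteq> (u',v')"
  shows "Tint P s u v \<inter> Tint P s u' v' = {}"
proof (cases "u = u'")
  case True
  then have "v \<noteq> v'" using assms by auto
  then show ?thesis using Tint_disj_same[of v v' P s u] Tint_disj_same[of v' v P s u] True
    by (cases "v < v'") (auto simp: Int_commute)
next
  case False
  show ?thesis
  proof (rule ccontr)
    assume "Tint P s u v \<inter> Tint P s u' v' \<noteq> {}"
    then obtain x where "x \<in> Tint P s u v" "x \<in> Tint P s u' v'" by blast
    then have "x div s = u" "x div s = u'"
      using Tint_div[where P=P and u=u, OF rs] Tint_div[where P=P and u=u', OF rs] assms by blast+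
    then show False using False by simp
  qed
qed

lemma Tint_card: "card (Tint P s u v) = P u v"
  by (simp add: Tint_def)


lemma perm_unitary:
  assumes f: "bij_betw f {..<n} {..<n}"
  shows "unitary_mat n (\<lambda>a b. if f a = b then 1 else 0)"
proof -
  have r: "(\<Sum>c<n. (if f a = c then 1 else 0) * cnj (if f b = c then 1 else (0::complex))) = (if a = b then 1 else 0)"
    if "a < n" "b < n" for a b
  proof -
    have "f a < n" using f that by (auto simp: bij_betw_def)
    moreover have "f a = f b \<longleftrightarrow> a = b" using f that by (auto simp: bij_betw_def inj_on_def)
    moreover have "(if f a = c then 1 else 0) * cnj (if f b = c then 1 else (0::complex)) = (if f a = c then (if a = b then 1 else 0) else 0)" for c
      using \<open>f a = f b \<longleftrightarrow> a = b\<close> by auto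
    ultimately show ?thesis by (simp add: sum.delta)
  qed
  have c: "(\<Sum>c<n. cnj (if f c = a then 1 else 0) * (if f c = b then 1 else (0::complex))) = (if a = b then 1 else 0)"
    if "a < n" "b < n" for a b
  proof -
    have "(\<Sum>c<n. cnj (if f c = a then 1 else 0) * (if f c = b then 1 else (0::complex)))
        = (\<Sum>y<n. cnj (if y = a then 1 else 0) * (if y = b then 1 else (0::complex)))"
      using sum.reindex_bij_betw[OF f, of "\<lambda>y. cnj (if y = a then 1 else 0) * (if y = b then 1 else (0::complex))"]
      by simp
    also have "\<dots> = (\<Sum>y<n. if y = a then (if a = b then 1 else 0) else (0::complex))"
      by (rule sum.cong) auto
    also have "\<dots> = (if a = b then 1 else 0)" using that by (simp add: sum.delta)
    finally show ?thesis .
  qed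
  show ?thesis unfolding unitary_mat_def using r c by blast
qed

lemma indic_sum:
  assumes "(s::nat) > 0"
  shows "(\<Sum>b<s. if w = j * s + b then 1 else (0::real)) = (if w div s = j then 1 else 0)"
proof -
  have e: "(w = j * s + b) = (b = w mod s \<and> w div s = j)" if "b < s" for b
  proof
    assume "w = j * s + b" then show "b = w mod s \<and> w div s = j" using that by simp
  next
    assume "b = w mod s \<and> w div s = j" then show "w = j * s + b" by (metis div_mult_mod_eq)
  qed
  have "(\<Sum>b<s. if w = j * s + b then 1 else (0::real)) = (\<Sum>b<s. if b = w mod s \<and> w div s = j then 1 else 0)"
    by (rule sum.cong) (auto simp: e)
  also have "\<dots> = (if w div s = j then 1 else 0)"
    using assms by (simp add: sum.delta' cong: conj_cong)
  finally show ?thesis .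
qed


lemma approx:
  fixes B :: "real^'d::finite^'d"
  assumes B: "B \<in> bistochastic" and eps: "\<epsilon> > 0"
  shows "\<exists>s\<in>{1..}. \<exists>A\<in>(unistochastic_gen s :: (real^'d^'d) set). dist A B < \<epsilon>"
proof -
  define d where "d = CARD('d)"
  define e where "e = inv_into (UNIV::'d set) idx"
  have ib: "bij_betw (idx::'d \<Rightarrow> nat) UNIV {..<d}" using idx_bij d_def by simp
  have ei: "idx (e i) = i" if "i < d" for i
    using ib that unfolding e_def by (simp add: bij_betw_def f_inv_into_f)
  have ie: "e (idx x) = x" for x :: 'd
    using ib unfolding e_def by (simp add: bij_betw_def inv_into_f_f)
  have ilt: "idx x < d" for x :: 'd using ib by (auto simp: bij_betw_def)
  have reidx: "(\<Sum>j<d. g (e j)) = (\<Sum>x\<in>UNIV. g x)" for g :: "'d \<Rightarrow> real"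
    using sum.reindex_bij_betw[OF ib, of "\<lambda>j. g (e j)"] by (simp add: ie)
  have d1: "d \<ge> 1" unfolding d_def by (simp add: Suc_leI)
  define Bn where "Bn i j = B $ e i $ e j" for i j
  have Bnn: "Bn i j \<ge> 0" for i j using B unfolding bistochastic_def Bn_def by auto
  have Brow: "(\<Sum>j<d. Bn i j) = 1" for i
    using B reidx[of "\<lambda>x. B $ e i $ x"] unfolding bistochastic_def Bn_def by auto
  have Bcol: "(\<Sum>i<d. Bn i j) = 1" for j
    using B reidx[of "\<lambda>x. B $ x $ e j"] unfolding bistochastic_def Bn_def by auto
  define s :: nat where "s = nat \<lceil>real d ^ 3 / \<epsilon>\<rceil> + 1"
  have s0: "s > 0" by (simp add: s_def)
  have sbig: "real d ^ 3 / \<epsilon> < real s"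
    unfolding s_def by linarith
  have sd: "real d ^ 3 / real s < \<epsilon>"
    using sbig eps s0 by (simp add: field_simps)
  define N where "N i j = nat \<lfloor>real s * Bn i j\<rfloor>" for i j
  have Nle: "real (N i j) \<le> real s * Bn i j" for i j
    using Bnn[of i j] unfolding N_def by simp
  have Ngt: "real (N i j) > real s * Bn i j - 1" for i j
    using Bnn[of i j] unfolding N_def by linarith
  have rowN: "(\<Sum>w<d. N u w) \<le> s" for u
  proof -
    have "real (\<Sum>w<d. N u w) = (\<Sum>w<d. real (N u w))" by simp
    also have "\<dots> \<le> (\<Sum>w<d. real s * Bn u w)" by (intro sum_mono Nle)
    also have "\<dots> = real s" using Brow by (simp add: sum_distrib_left[symmetric])
    finally show ?thesis by linarith
  qed
  have colN: "(\<Sum>w<d. N w u) \<le> s" for u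
  proof -
    have "real (\<Sum>w<d. N w u) = (\<Sum>w<d. real (N w u))" by simp
    also have "\<dots> \<le> (\<Sum>w<d. real s * Bn w u)" by (intro sum_mono Nle)
    also have "\<dots> = real s" using Bcol by (simp add: sum_distrib_left[symmetric])
    finally show ?thesis by linarith
  qed
  define NT where "NT u v = N v u" for u v
  have rowNT: "(\<Sum>w<d. NT u w) \<le> s" for u using colN by (simp add: NT_def)
  define I where "I k = Tint N s (fst k) (snd k)" for k
  define J where "J k = Tint NT s (snd k) (fst k)" for k
  define K where "K = {..<d} \<times> {..<d}"
  have "\<exists>f. bij_betw f {..<d * s} {..<d * s} \<and> (\<forall>k\<in>K. \<forall>x\<in>I k. f x \<in> J k)"
  proof (rule perm_extend)
    show "\<forall>k\<in>K. I k \<subseteq> {..<d * s}" unfolding K_def I_def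
      using Tint_sub[where P=N, OF rowN] by auto
    show "\<forall>k\<in>K. J k \<subseteq> {..<d * s}" unfolding K_def J_def
      using Tint_sub[where P=NT, OF rowNT] by auto
    show "\<forall>k\<in>K. \<forall>k'\<in>K. k \<noteq> k' \<longrightarrow> I k \<inter> I k' = {}" unfolding K_def I_def
      using Tint_disj[where P=N, OF rowN] by auto
    show "\<forall>k\<in>K. \<forall>k'\<in>K. k \<noteq> k' \<longrightarrow> J k \<inter> J k' = {}" unfolding K_def J_def
      using Tint_disj[where P=NT, OF rowNT] by fastforce
    show "\<forall>k\<in>K. card (I k) = card (J k)" unfolding I_def J_def
      by (simp add: Tint_card NT_def)
  qed (auto simp: K_def)
  then obtain f where f: "bij_betw f {..<d * s} {..<d * s}"
    and fIJ: "\<And>k x. k \<in> K \<Longrightarrow> x \<in> I k \<Longrightarrow> f x \<in> J k" by blast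
  define U where "U = (\<lambda>a b. if f a = b then 1 else (0::complex))"
  have Uu: "unitary_mat (CARD('d) * s) U" unfolding U_def d_def[symmetric] by (rule perm_unitary[OF f])
  define A where "A = (phi s U :: real^'d^'d)"
  have Ain: "A \<in> unistochastic_gen s" unfolding A_def unistochastic_gen_def using Uu by blast
  define m where "m i j = (\<Sum>a<s. if f (i * s + a) div s = j then 1 else (0::real))" for i j
  have Aent: "A $ x $ y = m (idx x) (idx y) / real s" for x y
  proof -
    have "A $ x $ y = (1 / real s) * (\<Sum>a<s. \<Sum>b<s. if f (idx x * s + a) = idx y * s + b then 1 else (0::real))"
    proof -
      have c: "(cmod (if P then 1 else 0))\<^sup>2 = (if P then 1 else (0::real))" for P by auto
      show ?thesis unfolding A_def phi_def U_def by (simp only: c vec_lambda_beta)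
    qed
    also have "\<dots> = (1 / real s) * m (idx x) (idx y)"
      unfolding m_def by (simp add: indic_sum[OF s0])
    finally show ?thesis by simp
  qed
  have msum: "(\<Sum>j<d. m i j) = real s" if "i < d" for i
  proof -
    have "(\<Sum>j<d. m i j) = (\<Sum>a<s. \<Sum>j<d. if f (i * s + a) div s = j then 1 else (0::real))"
      unfolding m_def by (rule sum.swap)
    also have "\<dots> = (\<Sum>a<s. 1)"
    proof (rule sum.cong[OF refl])
      fix a assume "a \<in> {..<s}"
      then have "i * s + a < d * s" using that blk_lt by auto
      then have "f (i * s + a) < d * s" using f by (auto simp: bij_betw_def)
      then have "f (i * s + a) div s < d" by (simp add: less_mult_imp_div_less)
      then show "(\<Sum>j<d. if f (i * s + a) div s = j then 1 else (0::real)) = 1"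
        by (simp add: sum.delta)
    qed
    finally show ?thesis by simp
  qed
  have mge: "real (N i j) \<le> m i j" if "i < d" "j < d" for i j
  proof -
    define R where "R = (\<Sum>w<j. N i w)"
    have Rs: "R + N i j \<le> s" unfolding R_def by (rule Tint_le[OF rowN \<open>j < d\<close>])
    have "real (N i j) = (\<Sum>a\<in>{R..<R + N i j}. if f (i * s + a) div s = j then 1 else (0::real))"
    proof -
      have "(\<Sum>a\<in>{R..<R + N i j}. if f (i * s + a) div s = j then 1 else (0::real)) = (\<Sum>a\<in>{R..<R + N i j}. 1)"
      proof (rule sum.cong[OF refl])
        fix a assume a: "a \<in> {R..<R + N i j}"
        have "i * s + a \<in> I (i, j)" using a unfolding I_def Tint_def R_def by auto
        then have "f (i * s + a) \<in> J (i, j)" using fIJ that unfolding K_def by auto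
        then have "f (i * s + a) div s = j"
          unfolding J_def using Tint_div[where P=NT, OF rowNT \<open>i < d\<close>] by auto
        then show "(if f (i * s + a) div s = j then 1 else (0::real)) = 1" by simp
      qed
      then show ?thesis by simp
    qed
    also have "\<dots> \<le> m i j" unfolding m_def
      by (rule sum_mono2) (use Rs in auto)
    finally show ?thesis .
  qed
  have mbound: "\<bar>m i j - real s * Bn i j\<bar> \<le> real d" if "i < d" "j < d" for i j
  proof -
    have low: "m i j \<ge> real s * Bn i j - real d" using mge[OF that] Ngt[of i j] d1 by linarith
    have "(\<Sum>w<d. m i w - (real s * Bn i w - 1)) = real d"
      using msum[OF \<open>i < d\<close>] Brow[of i]
      by (simp add: sum_subtractf sum_distrib_left[symmetric])
    moreover have "m i j - (real s * Bn i j - 1) \<le> (\<Sum>w<d. m i w - (real s * Bn i w - 1))"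
    proof (rule member_le_sum)
      fix w assume "w \<in> {..<d} - {j}"
      then show "0 \<le> m i w - (real s * Bn i w - 1)" using mge[OF \<open>i < d\<close>, of w] Ngt[of i w] by auto
    qed (use that in auto)
    ultimately have "m i j \<le> real s * Bn i j + real d - 1" by linarith
    then show ?thesis using low by linarith
  qed
  have ent: "\<bar>(A - B) $ x $ y\<bar> \<le> real d / real s" for x y
  proof -
    have "(A - B) $ x $ y = m (idx x) (idx y) / real s - Bn (idx x) (idx y)"
      by (simp add: Aent Bn_def ie)
    also have "\<dots> = (m (idx x) (idx y) - real s * Bn (idx x) (idx y)) / real s"
      using s0 by (simp add: field_simps)
    finally have "\<bar>(A - B) $ x $ y\<bar> = \<bar>m (idx x) (idx y) - real s * Bn (idx x) (idx y)\<bar> / real s"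
      by simp
    also have "\<dots> \<le> real d / real s"
      using mbound[OF ilt ilt] s0 by (simp add: divide_right_mono)
    finally show ?thesis .
  qed
  have "dist A B = norm (A - B)" by (simp add: dist_norm)
  also have "\<dots> \<le> (\<Sum>x\<in>UNIV. norm ((A - B) $ x))" unfolding norm_vec_def by (rule L2_set_le_sum) simp
  also have "\<dots> \<le> (\<Sum>x\<in>(UNIV::'d set). \<Sum>y\<in>(UNIV::'d set). \<bar>(A - B) $ x $ y\<bar>)"
    by (intro sum_mono) (rule norm_le_l1_cart)
  also have "\<dots> \<le> (\<Sum>x\<in>(UNIV::'d set). \<Sum>y\<in>(UNIV::'d set). real d / real s)"
    by (intro sum_mono ent)
  also have "\<dots> = real d ^ 3 / real s" by (simp add: d_def power3_eq_cube)
  also have "\<dots> < \<epsilon>" by (rule sd)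
  finally have "dist A B < \<epsilon>" .
  moreover have "s \<in> {1..}" using s0 by simp
  ultimately show ?thesis using Ain by blast
qed


lemma closed_bist: "closed (bistochastic :: (real^'d::finite^'d) set)"
  unfolding bistochastic_def
  by (intro closed_Collect_conj closed_Collect_all closed_Collect_le closed_Collect_eq
      continuous_intros)

theorem theorem2p8:
  assumes "CARD('d::finite) \<ge> 2"
  shows "closure (\<Union>s\<in>{1..}. (unistochastic_gen s :: (real^'d^'d) set)) = bistochastic"
proof
  show "closure (\<Union>s\<in>{1..}. (unistochastic_gen s :: (real^'d^'d) set)) \<subseteq> bistochastic"
  proof (rule closure_minimal[OF _ closed_bist])
    show "(\<Union>s\<in>{1..}. (unistochastic_gen s :: (real^'d^'d) set)) \<subseteq> bistochastic"
    proof
      fix A assume "A \<in> (\<Union>s\<in>{1..}. (unistochastic_gen s :: (real^'d^'d) set))"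
      then obtain s U where s: "s \<ge> 1" and U: "unitary_mat (CARD('d) * s) U" and A: "A = phi s U"
        unfolding unistochastic_gen_def by auto
      have "s > 0" using s by simp
      show "A \<in> bistochastic" unfolding A by (rule phi_bist[OF \<open>s > 0\<close> U])
    qed
  qed
next
  show "bistochastic \<subseteq> closure (\<Union>s\<in>{1..}. (unistochastic_gen s :: (real^'d^'d) set))"
  proof
    fix B :: "real^'d^'d" assume B: "B \<in> bistochastic"
    show "B \<in> closure (\<Union>s\<in>{1..}. (unistochastic_gen s :: (real^'d^'d) set))"
      unfolding closure_approachable
    proof (intro allI impI)
      fix e :: real assume "e > 0"
      from approx[OF B this] obtain s A where "s \<in> {1..}" "A \<in> (unistochastic_gen s :: (real^'d^'d) set)" "dist A B < e"
        by blast
      then show "\<exists>y\<in>\<Union>s\<in>{1..}. (unistochastic_gen s :: (real^'d^'d) set). dist y B < e" by blast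
    qed
  qed
qed

end
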